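(* Any two principle homomorphism dilation systems $(\pi_1,S_1,T_1,W_1)$ and $(\pi_2,S_2,T_2,W_2)$ of a linear system $(\varphi,\mathcal A,V)$ are equivalent. In particular every principle dilation system is equivalent to the canonical dilation.
   Context: Fix a field $\mathbb F$; all algebras and vector spaces are over $\mathbb F$, and $L(X)$ is the algebra of linear maps $X\to X$. A linear system $(\varphi,\mathcal A,V)$: $\mathcal A$ a unital associative algebra with unit $I$, $V$ a vector space, $\varphi:\mathcal A\to L(V)$ linear with $\varphi(I)=\mathrm{id}_V$. A homomorphism dilation system $(\pi,S,T,W)$: $W$ a vector space, $\pi:\mathcal A\to L(W)$ a unital homomorphism, $T:V\to W$ injective linear, $S:W\to V$ surjective linear, $\varphi(a)=S\pi(a)T$ for all $a$. It is linearly minimal if $W=\mathrm{span}\{\pi(a)Tv\}$, irreducible if $\ker S$ contains no nonzero subspace invariant under all $\pi(a)$, and principle if linearly minimal and irreducible. Two linearly minimal systems are equivalent if there is a bijective linear $R:W_1\to W_2$ with $RT_1=T_2$, $S_2R=S_1$, $\pi_1(a)=R^{-1}\pi_2(a)R$ for all $a$. Canonical dilation: $\alpha_{a,x}\in L(\mathcal A,V)$, $\alpha_{a,x}(b)=\varphi(ba)x$; $W_c=\mathrm{span}\{\alpha_{a,x}\}$; $\pi_c(a)\alpha_{b,x}=\alpha_{ab,x}$; $T_cx=\alpha_{I,x}$; $S_c(\alpha_{a,x})=\varphi(a)x$. *)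

theory Defs
  imports Complex_Main "HOL-Library.Function_Algebras"
begin

definition lin_on :: "('f \<Rightarrow> 'v::plus \<Rightarrow> 'v) \<Rightarrow> ('f \<Rightarrow> 'w::plus \<Rightarrow> 'w) \<Rightarrow> 'v set \<Rightarrow> ('v \<Rightarrow> 'w) \<Rightarrow> bool"
  where "lin_on s1 s2 X f \<longleftrightarrow>
     (\<forall>x\<in>X. \<forall>y\<in>X. f (x + y) = f x + f y) \<and> (\<forall>c. \<forall>x\<in>X. f (s1 c x) = s2 c (f x))"

text \<open>A unital associative algebra over the field 'f: the ring type 'a (ring_1 gives
  associativity and the unit 1 = I) which is an 'f-vector space via scaleA, with
  bilinear multiplication.\<close>
definition unital_algebra :: "('f::field \<Rightarrow> 'a::ring_1 \<Rightarrow> 'a) \<Rightarrow> bool"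
  where "unital_algebra scaleA \<longleftrightarrow> vector_space scaleA \<and>
     (\<forall>c x y. scaleA c (x * y) = scaleA c x * y \<and> scaleA c (x * y) = x * scaleA c y)"

definition linear_system :: "('f::field \<Rightarrow> 'a::ring_1 \<Rightarrow> 'a) \<Rightarrow> ('f \<Rightarrow> 'v::ab_group_add \<Rightarrow> 'v)
     \<Rightarrow> ('a \<Rightarrow> 'v \<Rightarrow> 'v) \<Rightarrow> bool"
  where "linear_system scaleA scaleV \<phi> \<longleftrightarrow>
     unital_algebra scaleA \<and> vector_space scaleV \<and>
     (\<forall>a. lin_on scaleV scaleV UNIV (\<phi> a)) \<and>
     (\<forall>a b x. \<phi> (a + b) x = \<phi> a x + \<phi> b x) \<and>
     (\<forall>c a x. \<phi> (scaleA c a) x = scaleV c (\<phi> a x)) \<and>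
     (\<forall>x. \<phi> 1 x = x)"

text \<open>Homomorphism dilation system (pi, S, T, W); W is a subspace of the vector space
  type 'w (with scalar multiplication scaleW), maps on W are only considered on W.\<close>
definition hom_dilation ::
  "('f::field \<Rightarrow> 'a::ring_1 \<Rightarrow> 'a) \<Rightarrow> ('f \<Rightarrow> 'v::ab_group_add \<Rightarrow> 'v) \<Rightarrow> ('f \<Rightarrow> 'w::ab_group_add \<Rightarrow> 'w)
   \<Rightarrow> ('a \<Rightarrow> 'v \<Rightarrow> 'v) \<Rightarrow> ('a \<Rightarrow> 'w \<Rightarrow> 'w) \<Rightarrow> ('w \<Rightarrow> 'v) \<Rightarrow> ('v \<Rightarrow> 'w) \<Rightarrow> 'w set \<Rightarrow> bool"
  where "hom_dilation scaleA scaleV scaleW \<phi> \<pi> S T W \<longleftrightarrow>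
     vector_space scaleW \<and> module.subspace scaleW W \<and>
     \<comment> \<open>pi : A -> L(W) is a unital algebra homomorphism\<close>
     (\<forall>a. \<forall>w\<in>W. \<pi> a w \<in> W) \<and>
     (\<forall>a. lin_on scaleW scaleW W (\<pi> a)) \<and>
     (\<forall>a b. \<forall>w\<in>W. \<pi> (a + b) w = \<pi> a w + \<pi> b w) \<and>
     (\<forall>c a. \<forall>w\<in>W. \<pi> (scaleA c a) w = scaleW c (\<pi> a w)) \<and>
     (\<forall>a b. \<forall>w\<in>W. \<pi> (a * b) w = \<pi> a (\<pi> b w)) \<and>
     (\<forall>w\<in>W. \<pi> 1 w = w) \<and>
     \<comment> \<open>T : V -> W injective linear\<close>
     lin_on scaleV scaleW UNIV T \<and> range T \<subseteq> W \<and> inj T \<and>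
     \<comment> \<open>S : W -> V surjective linear\<close>
     lin_on scaleW scaleV W S \<and> S ` W = UNIV \<and>
     (\<forall>a x. \<phi> a x = S (\<pi> a (T x)))"

definition linearly_minimal :: "('f::field \<Rightarrow> 'w::ab_group_add \<Rightarrow> 'w)
   \<Rightarrow> ('a \<Rightarrow> 'w \<Rightarrow> 'w) \<Rightarrow> ('v \<Rightarrow> 'w) \<Rightarrow> 'w set \<Rightarrow> bool"
  where "linearly_minimal scaleW \<pi> T W \<longleftrightarrow>
     W = module.span scaleW {\<pi> a (T v) | a v. True}"

definition irreducible_dil :: "('f::field \<Rightarrow> 'w::ab_group_add \<Rightarrow> 'w)
   \<Rightarrow> ('a \<Rightarrow> 'w \<Rightarrow> 'w) \<Rightarrow> ('w \<Rightarrow> 'v::zero) \<Rightarrow> 'w set \<Rightarrow> bool"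
  where "irreducible_dil scaleW \<pi> S W \<longleftrightarrow>
     (\<forall>U. module.subspace scaleW U \<and> U \<subseteq> {w \<in> W. S w = 0} \<and>
          (\<forall>a. \<forall>u\<in>U. \<pi> a u \<in> U) \<longrightarrow> U = {0})"

definition principle_dilation ::
  "('f::field \<Rightarrow> 'a::ring_1 \<Rightarrow> 'a) \<Rightarrow> ('f \<Rightarrow> 'v::ab_group_add \<Rightarrow> 'v) \<Rightarrow> ('f \<Rightarrow> 'w::ab_group_add \<Rightarrow> 'w)
   \<Rightarrow> ('a \<Rightarrow> 'v \<Rightarrow> 'v) \<Rightarrow> ('a \<Rightarrow> 'w \<Rightarrow> 'w) \<Rightarrow> ('w \<Rightarrow> 'v) \<Rightarrow> ('v \<Rightarrow> 'w) \<Rightarrow> 'w set \<Rightarrow> bool"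
  where "principle_dilation scaleA scaleV scaleW \<phi> \<pi> S T W \<longleftrightarrow>
     hom_dilation scaleA scaleV scaleW \<phi> \<pi> S T W \<and>
     linearly_minimal scaleW \<pi> T W \<and> irreducible_dil scaleW \<pi> S W"

definition equivalent_dil ::
  "('f::field \<Rightarrow> 'w1::ab_group_add \<Rightarrow> 'w1) \<Rightarrow> ('f \<Rightarrow> 'w2::ab_group_add \<Rightarrow> 'w2)
   \<Rightarrow> ('a \<Rightarrow> 'w1 \<Rightarrow> 'w1) \<Rightarrow> ('w1 \<Rightarrow> 'v) \<Rightarrow> ('v \<Rightarrow> 'w1) \<Rightarrow> 'w1 set
   \<Rightarrow> ('a \<Rightarrow> 'w2 \<Rightarrow> 'w2) \<Rightarrow> ('w2 \<Rightarrow> 'v) \<Rightarrow> ('v \<Rightarrow> 'w2) \<Rightarrow> 'w2 set \<Rightarrow> bool"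
  where "equivalent_dil scale1 scale2 \<pi>1 S1 T1 W1 \<pi>2 S2 T2 W2 \<longleftrightarrow>
     (\<exists>R. lin_on scale1 scale2 W1 R \<and> bij_betw R W1 W2 \<and>
          (\<forall>x. R (T1 x) = T2 x) \<and> (\<forall>w\<in>W1. S2 (R w) = S1 w) \<and>
          (\<forall>a. \<forall>w\<in>W1. \<pi>1 a w = inv_into W1 R (\<pi>2 a (R w))))"

text \<open>Canonical dilation, living in the function space L(A,V) \<subseteq> ('a \<Rightarrow> 'v).\<close>
definition canon_alpha :: "('a::times \<Rightarrow> 'v \<Rightarrow> 'v) \<Rightarrow> 'a \<Rightarrow> 'v \<Rightarrow> ('a \<Rightarrow> 'v)"
  where "canon_alpha \<phi> a x = (\<lambda>b. \<phi> (b * a) x)"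

definition canon_scale :: "('f \<Rightarrow> 'v \<Rightarrow> 'v) \<Rightarrow> 'f \<Rightarrow> ('a \<Rightarrow> 'v) \<Rightarrow> ('a \<Rightarrow> 'v)"
  where "canon_scale scaleV c f = (\<lambda>b. scaleV c (f b))"

definition canon_W :: "('f::field \<Rightarrow> 'v::ab_group_add \<Rightarrow> 'v) \<Rightarrow> ('a::times \<Rightarrow> 'v \<Rightarrow> 'v) \<Rightarrow> ('a \<Rightarrow> 'v) set"
  where "canon_W scaleV \<phi> = module.span (canon_scale scaleV) {canon_alpha \<phi> a x | a x. True}"

text \<open>pi_c(a) alpha_{b,x} = alpha_{ab,x}; its linear extension is right translation by a.\<close>
definition canon_pi :: "'a::times \<Rightarrow> ('a \<Rightarrow> 'v) \<Rightarrow> ('a \<Rightarrow> 'v)"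
  where "canon_pi a f = (\<lambda>c. f (c * a))"

definition canon_T :: "('a::monoid_mult \<Rightarrow> 'v \<Rightarrow> 'v) \<Rightarrow> 'v \<Rightarrow> ('a \<Rightarrow> 'v)"
  where "canon_T \<phi> x = canon_alpha \<phi> 1 x" 

text \<open>S_c(alpha_{a,x}) = phi(a) x = alpha_{a,x}(I); its linear extension is evaluation at I.\<close>
definition canon_S :: "('a::one \<Rightarrow> 'v) \<Rightarrow> 'v"
  where "canon_S f = f 1"

end

theory Submission
  imports Defs
begin

lemma equiv_from:
  assumes lin: "lin_on s1 s2 W1 R" and inj: "inj_on R W1" and img: "R ` W1 = W2"
    and RT: "\<forall>x. R (T1 x) = T2 x" and RS: "\<forall>w\<in>W1. S2 (R w) = S1 w"
    and Rpi: "\<forall>a. \<forall>w\<in>W1. R (\<pi>1 a w) = \<pi>2 a (R w)"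
    and inv1: "\<forall>a. \<forall>w\<in>W1. \<pi>1 a w \<in> W1"
  shows "equivalent_dil s1 s2 \<pi>1 S1 T1 W1 \<pi>2 S2 T2 W2"
  unfolding equivalent_dil_def
proof (intro exI conjI ballI allI)
  show "bij_betw R W1 W2" using inj img by (simp add: bij_betw_def)
  fix a w assume w: "w \<in> W1"
  have "inv_into W1 R (\<pi>2 a (R w)) = inv_into W1 R (R (\<pi>1 a w))" using Rpi w by simp
  also have "\<dots> = \<pi>1 a w" using inv_into_f_f[OF inj] inv1 w by blast
  finally show "\<pi>1 a w = inv_into W1 R (\<pi>2 a (R w))" by simp
qed (use lin RT RS in auto)

lemma compose:
  assumes lin1: "lin_on s1 s W1 R1" and inj1: "inj_on R1 W1" and img1: "R1 ` W1 = W"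
    and RT1: "\<forall>x. R1 (T1 x) = T x" and RS1: "\<forall>w\<in>W1. S (R1 w) = S1 w"
    and Rpi1: "\<forall>a. \<forall>w\<in>W1. R1 (\<pi>1 a w) = \<pi> a (R1 w)"
    and inv1: "\<forall>a. \<forall>w\<in>W1. \<pi>1 a w \<in> W1"
    and add1: "\<forall>x\<in>W1. \<forall>y\<in>W1. x + y \<in> W1" and sc1: "\<forall>c. \<forall>x\<in>W1. s1 c x \<in> W1"
    and lin2: "lin_on s2 s W2 R2" and inj2: "inj_on R2 W2" and img2: "R2 ` W2 = W"
    and RT2: "\<forall>x. R2 (T2 x) = T x" and RS2: "\<forall>w\<in>W2. S (R2 w) = S2 w"
    and Rpi2: "\<forall>a. \<forall>w\<in>W2. R2 (\<pi>2 a w) = \<pi> a (R2 w)"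
    and inv2: "\<forall>a. \<forall>w\<in>W2. \<pi>2 a w \<in> W2"
    and add2: "\<forall>x\<in>W2. \<forall>y\<in>W2. x + y \<in> W2" and sc2: "\<forall>c. \<forall>x\<in>W2. s2 c x \<in> W2"
    and T2W: "\<forall>x. T2 x \<in> W2"
  shows "equivalent_dil s1 s2 \<pi>1 S1 T1 W1 \<pi>2 S2 T2 W2"
proof -
  define k where "k = (\<lambda>w. inv_into W2 R2 (R1 w))"
  have kW: "k w \<in> W2" and kR: "R2 (k w) = R1 w" if "w \<in> W1" for w
  proof -
    have "R1 w \<in> R2 ` W2" using that img1 img2 by auto
    then show "k w \<in> W2" "R2 (k w) = R1 w" unfolding k_def
      by (auto intro: inv_into_into f_inv_into_f)
  qed
  have eq: "x = y" if "x \<in> W2" "y \<in> W2" "R2 x = R2 y" for x y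
    using inj2 that by (auto dest: inj_onD)
  show ?thesis
  proof (rule equiv_from[where R = k])
    show "lin_on s1 s2 W1 k" unfolding lin_on_def
    proof (intro conjI ballI allI)
      fix x y assume xy: "x \<in> W1" "y \<in> W1"
      have "x + y \<in> W1" using xy add1 by blast
      show "k (x + y) = k x + k y"
      proof (rule eq)
        show "k (x + y) \<in> W2" using kW \<open>x + y \<in> W1\<close> .
        show "k x + k y \<in> W2" using add2 kW xy by blast
        have "R2 (k x + k y) = R2 (k x) + R2 (k y)" using lin2 kW xy unfolding lin_on_def by blast
        also have "\<dots> = R1 (x + y)" using kR xy lin1 unfolding lin_on_def by simp
        finally show "R2 (k (x + y)) = R2 (k x + k y)" using kR \<open>x + y \<in> W1\<close> by simp
      qed
    next
      fix c x assume x: "x \<in> W1"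
      have "s1 c x \<in> W1" using x sc1 by blast
      show "k (s1 c x) = s2 c (k x)"
      proof (rule eq)
        show "k (s1 c x) \<in> W2" using kW \<open>s1 c x \<in> W1\<close> .
        show "s2 c (k x) \<in> W2" using sc2 kW x by blast
        have "R2 (s2 c (k x)) = s c (R2 (k x))" using lin2 kW x unfolding lin_on_def by blast
        also have "\<dots> = R1 (s1 c x)" using kR x lin1 unfolding lin_on_def by simp
        finally show "R2 (k (s1 c x)) = R2 (s2 c (k x))" using kR \<open>s1 c x \<in> W1\<close> by simp
      qed
    qed
    show "inj_on k W1" unfolding k_def
      by (rule comp_inj_on[OF inj1, unfolded comp_def]) (metis inj_on_inv_into img1 img2 order_refl)
    show "k ` W1 = W2" unfolding k_def
      using inv_into_image_cancel[OF inj2, of W2] img1 img2 by (simp add: image_image[symmetric])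
    show "\<forall>x. k (T1 x) = T2 x" unfolding k_def using RT1 RT2 T2W inv_into_f_f[OF inj2] by metis
    show "\<forall>w\<in>W1. S2 (k w) = S1 w" using RS2 kW kR RS1 by metis
    show "\<forall>a. \<forall>w\<in>W1. k (\<pi>1 a w) = \<pi>2 a (k w)"
    proof (intro allI ballI)
      fix a w assume w: "w \<in> W1"
      show "k (\<pi>1 a w) = \<pi>2 a (k w)"
        by (rule eq) (use kW kR inv1 inv2 w Rpi1 Rpi2 in auto)
    qed
  qed (use inv1 in auto)
qed


lemma canon_module:
  assumes "vector_space scaleV"
  shows "module (canon_scale (scaleV :: 'f::field \<Rightarrow> 'v::ab_group_add \<Rightarrow> 'v) :: 'f \<Rightarrow> ('a \<Rightarrow> 'v) \<Rightarrow> _)"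
  using assms unfolding module_def vector_space_def canon_scale_def
  by (auto simp: fun_eq_iff plus_fun_def)

lemma canon:
  fixes scaleA :: "'f::field \<Rightarrow> 'a::ring_1 \<Rightarrow> 'a"
    and scaleV :: "'f \<Rightarrow> 'v::ab_group_add \<Rightarrow> 'v"
    and \<phi> :: "'a \<Rightarrow> 'v \<Rightarrow> 'v"
    and scaleW :: "'f \<Rightarrow> 'w::ab_group_add \<Rightarrow> 'w"
  assumes LS: "linear_system scaleA scaleV \<phi>"
    and P: "principle_dilation scaleA scaleV scaleW \<phi> \<pi> S T W"
  defines "R \<equiv> (\<lambda>w b. S (\<pi> b w))"
  shows "lin_on scaleW (canon_scale scaleV) W R \<and> inj_on R W \<and> R ` W = canon_W scaleV \<phi> \<and>
    (\<forall>x. R (T x) = canon_T \<phi> x) \<and> (\<forall>w\<in>W. canon_S (R w) = S w) \<and>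
    (\<forall>a. \<forall>w\<in>W. R (\<pi> a w) = canon_pi a (R w))"
proof -
  have vsV: "vector_space scaleV" using LS unfolding linear_system_def by blast
  have mV: "module scaleV" using vsV by (simp add: module_iff_vector_space)
  have mc: "module (canon_scale scaleV :: 'f \<Rightarrow> ('a \<Rightarrow> 'v) \<Rightarrow> _)" by (rule canon_module[OF vsV])
  have H: "hom_dilation scaleA scaleV scaleW \<phi> \<pi> S T W"
    using P unfolding principle_dilation_def by (elim conjE) assumption
  have LM: "linearly_minimal scaleW \<pi> T W"
    using P unfolding principle_dilation_def by (elim conjE) assumption
  have IR: "irreducible_dil scaleW \<pi> S W"
    using P unfolding principle_dilation_def by (elim conjE) assumption
  have vsW: "vector_space scaleW"
    using H unfolding hom_dilation_def by (elim conjE) assumption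
  have mW: "module scaleW" using vsW by (simp add: module_iff_vector_space)
  have sub: "module.subspace scaleW W"
    using H unfolding hom_dilation_def by (elim conjE) assumption
  have piW0: "\<forall>a. \<forall>w\<in>W. \<pi> a w \<in> W"
    using H unfolding hom_dilation_def by (elim conjE) assumption
  have linpi: "\<forall>a. lin_on scaleW scaleW W (\<pi> a)"
    using H unfolding hom_dilation_def by (elim conjE) assumption
  have pimul0: "\<forall>a b. \<forall>w\<in>W. \<pi> (a * b) w = \<pi> a (\<pi> b w)"
    using H unfolding hom_dilation_def by (elim conjE) assumption
  have pi10: "\<forall>w\<in>W. \<pi> 1 w = w"
    using H unfolding hom_dilation_def by (elim conjE) assumption
  have TW0: "range T \<subseteq> W"
    using H unfolding hom_dilation_def by (elim conjE) assumption
  have linS: "lin_on scaleW scaleV W S"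
    using H unfolding hom_dilation_def by (elim conjE) assumption
  have phi0: "\<forall>a x. \<phi> a x = S (\<pi> a (T x))"
    using H unfolding hom_dilation_def by (elim conjE) assumption
  have piW: "\<And>a w. w \<in> W \<Longrightarrow> \<pi> a w \<in> W" using piW0 by blast
  have piadd: "\<And>a x y. x \<in> W \<Longrightarrow> y \<in> W \<Longrightarrow> \<pi> a (x + y) = \<pi> a x + \<pi> a y"
    using linpi unfolding lin_on_def by blast
  have pisc: "\<And>a c x. x \<in> W \<Longrightarrow> \<pi> a (scaleW c x) = scaleW c (\<pi> a x)"
    using linpi unfolding lin_on_def by blast
  have pimul: "\<And>a b w. w \<in> W \<Longrightarrow> \<pi> (a * b) w = \<pi> a (\<pi> b w)" using pimul0 by blast
  have pi1: "\<And>w. w \<in> W \<Longrightarrow> \<pi> 1 w = w" using pi10 by blast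
  have TW: "\<And>x. T x \<in> W" using TW0 by blast
  have Sadd: "\<And>x y. x \<in> W \<Longrightarrow> y \<in> W \<Longrightarrow> S (x + y) = S x + S y"
    using linS unfolding lin_on_def by blast
  have Ssc: "\<And>c x. x \<in> W \<Longrightarrow> S (scaleW c x) = scaleV c (S x)"
    using linS unfolding lin_on_def by blast
  have phi: "\<And>a x. \<phi> a x = S (\<pi> a (T x))" using phi0 by blast
  have W0: "0 \<in> W" using module.subspace_0[OF mW sub] .
  have Wadd: "\<And>x y. x \<in> W \<Longrightarrow> y \<in> W \<Longrightarrow> x + y \<in> W" using module.subspace_add[OF mW sub] .
  have Wsc: "\<And>c x. x \<in> W \<Longrightarrow> scaleW c x \<in> W" using module.subspace_scale[OF mW sub] .
  have Wdiff: "\<And>x y. x \<in> W \<Longrightarrow> y \<in> W \<Longrightarrow> x - y \<in> W" using module.subspace_diff[OF mW sub] .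
  have pi0: "\<And>a. \<pi> a 0 = 0" using piadd[OF W0 W0] by simp
  have S0: "S 0 = 0" using Sadd[OF W0 W0] by simp
  have Radd: "\<And>x y. x \<in> W \<Longrightarrow> y \<in> W \<Longrightarrow> R (x + y) = R x + R y"
    unfolding R_def by (simp add: fun_eq_iff piadd Sadd piW)
  have Rsc: "\<And>c x. x \<in> W \<Longrightarrow> R (scaleW c x) = canon_scale scaleV c (R x)"
    unfolding R_def canon_scale_def by (simp add: fun_eq_iff pisc Ssc piW)
  have R0: "R 0 = 0" unfolding R_def by (simp add: pi0 S0 fun_eq_iff)
  have lin: "lin_on scaleW (canon_scale scaleV) W R" unfolding lin_on_def using Radd Rsc by blast
  have Rpi: "\<And>a w. w \<in> W \<Longrightarrow> R (\<pi> a w) = canon_pi a (R w)"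
    unfolding R_def canon_pi_def by (simp add: fun_eq_iff pimul)
  define U where "U = {w \<in> W. \<forall>b. S (\<pi> b w) = 0}"
  have U0: "U = {0}"
  proof -
    have "module.subspace scaleW U"
      unfolding module.subspace_def[OF mW] U_def
      using W0 pi0 S0 Wadd Wsc by (auto simp: piadd Sadd piW pisc Ssc module.scale_zero_right[OF mV])
    moreover have "U \<subseteq> {w \<in> W. S w = 0}"
    proof
      fix w assume "w \<in> U"
      then have "w \<in> W" "S (\<pi> 1 w) = 0" unfolding U_def by auto
      then show "w \<in> {w \<in> W. S w = 0}" using pi1 by simp
    qed
    moreover have "\<forall>a. \<forall>u\<in>U. \<pi> a u \<in> U" unfolding U_def
      by (auto simp: piW pimul[symmetric])
    ultimately show ?thesis using IR unfolding irreducible_dil_def by blast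
  qed
  have inj: "inj_on R W"
  proof (rule inj_onI)
    fix x y assume xy: "x \<in> W" "y \<in> W" "R x = R y"
    have d: "x - y \<in> W" using Wdiff xy by blast
    have "R x = R (x - y) + R y" using Radd[OF d xy(2)] by simp
    then have "R (x - y) = 0" using xy by simp
    then have "\<forall>b. S (\<pi> b (x - y)) = 0" unfolding R_def by (simp add: fun_eq_iff)
    then have "x - y \<in> U" using d U_def by blast
    then show "x = y" using U0 by simp
  qed
  define G where "G = {\<pi> a (T v) | a v. True}"
  have WG: "W = module.span scaleW G" using LM unfolding linearly_minimal_def G_def by blast
  have Rgen: "\<And>a v. R (\<pi> a (T v)) = canon_alpha \<phi> a v"
    unfolding R_def canon_alpha_def by (auto simp: fun_eq_iff pimul TW phi)
  let ?Wc = "canon_W scaleV \<phi>"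
  have img: "R ` W = ?Wc"
  proof
    have "W \<subseteq> {w \<in> W. R w \<in> ?Wc}"
    proof -
      have "G \<subseteq> {w \<in> W. R w \<in> ?Wc}"
      proof
        fix g assume g: "g \<in> G"
        then have "g \<in> W" using WG module.span_superset[OF mW] by blast
        moreover obtain a v where "g = \<pi> a (T v)" using g G_def by blast
        then have Rg: "R g = canon_alpha \<phi> a v" using Rgen by simp
        have "R g \<in> ?Wc" unfolding canon_W_def Rg
          by (rule module.span_base[OF mc]) blast
        ultimately show "g \<in> {w \<in> W. R w \<in> ?Wc}" by blast
      qed
      moreover have "module.subspace scaleW {w \<in> W. R w \<in> ?Wc}"
        unfolding module.subspace_def[OF mW] canon_W_def
        using W0 R0 Wadd Wsc Radd Rsc
        by (auto simp: module.span_zero[OF mc] intro: module.span_add[OF mc] module.span_scale[OF mc])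
      ultimately show ?thesis using module.span_minimal[OF mW] WG by blast
    qed
    then show "R ` W \<subseteq> ?Wc" by blast
    have "{canon_alpha \<phi> a x | a x. True} \<subseteq> R ` W"
    proof
      fix f assume "f \<in> {canon_alpha \<phi> a x | a x. True}"
      then obtain a x where f: "f = canon_alpha \<phi> a x" by blast
      have "\<pi> a (T x) \<in> W" using TW piW by blast
      then show "f \<in> R ` W" unfolding f Rgen[symmetric] by blast
    qed
    moreover have "module.subspace (canon_scale scaleV) (R ` W)"
      unfolding module.subspace_def[OF mc]
    proof (intro conjI ballI allI)
      show "0 \<in> R ` W" using R0 W0 by (metis image_eqI)
    next
      fix x y assume "x \<in> R ` W" "y \<in> R ` W"
      then obtain x' y' where "x' \<in> W" "y' \<in> W" "x = R x'" "y = R y'" by blast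
      then show "x + y \<in> R ` W" using Radd Wadd by (metis image_eqI)
    next
      fix c x assume "x \<in> R ` W"
      then obtain x' where "x' \<in> W" "x = R x'" by blast
      then show "canon_scale scaleV c x \<in> R ` W" using Rsc Wsc by (metis image_eqI)
    qed
    ultimately show "?Wc \<subseteq> R ` W" unfolding canon_W_def using module.span_minimal[OF mc] by blast
  qed
  have RT: "\<forall>x. R (T x) = canon_T \<phi> x"
    unfolding R_def canon_T_def canon_alpha_def by (simp add: phi fun_eq_iff)
  have RS: "\<forall>w\<in>W. canon_S (R w) = S w" unfolding R_def canon_S_def by (simp add: pi1)
  show ?thesis using lin inj img RT RS Rpi by blast
qed


lemma dil_facts:
  assumes P: "principle_dilation scaleA scaleV scaleW \<phi> \<pi> S T W"
  shows "(\<forall>a. \<forall>w\<in>W. \<pi> a w \<in> W) \<and> (\<forall>x\<in>W. \<forall>y\<in>W. x + y \<in> W) \<and>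
         (\<forall>c. \<forall>x\<in>W. scaleW c x \<in> W) \<and> (\<forall>x. T x \<in> W)"
proof -
  have H: "hom_dilation scaleA scaleV scaleW \<phi> \<pi> S T W"
    using P unfolding principle_dilation_def by (elim conjE) assumption
  have vsW: "vector_space scaleW"
    using H unfolding hom_dilation_def by (elim conjE) assumption
  have mW: "module scaleW" using vsW by (simp add: module_iff_vector_space)
  have sub: "module.subspace scaleW W"
    using H unfolding hom_dilation_def by (elim conjE) assumption
  have piW0: "\<forall>a. \<forall>w\<in>W. \<pi> a w \<in> W"
    using H unfolding hom_dilation_def by (elim conjE) assumption
  have TW0: "range T \<subseteq> W"
    using H unfolding hom_dilation_def by (elim conjE) assumption
  show ?thesis using piW0 TW0 module.subspace_add[OF mW sub] module.subspace_scale[OF mW sub]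
    by blast
qed

theorem theorem3p3:
  fixes scaleA :: "'f::field \<Rightarrow> 'a::ring_1 \<Rightarrow> 'a"
    and scaleV :: "'f \<Rightarrow> 'v::ab_group_add \<Rightarrow> 'v"
    and \<phi> :: "'a \<Rightarrow> 'v \<Rightarrow> 'v"
    and scale1 :: "'f \<Rightarrow> 'w1::ab_group_add \<Rightarrow> 'w1"
    and \<pi>1 :: "'a \<Rightarrow> 'w1 \<Rightarrow> 'w1" and S1 :: "'w1 \<Rightarrow> 'v" and T1 :: "'v \<Rightarrow> 'w1" and W1 :: "'w1 set"
    and scale2 :: "'f \<Rightarrow> 'w2::ab_group_add \<Rightarrow> 'w2"
    and \<pi>2 :: "'a \<Rightarrow> 'w2 \<Rightarrow> 'w2" and S2 :: "'w2 \<Rightarrow> 'v" and T2 :: "'v \<Rightarrow> 'w2" and W2 :: "'w2 set"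
  assumes "linear_system scaleA scaleV \<phi>"
    and "principle_dilation scaleA scaleV scale1 \<phi> \<pi>1 S1 T1 W1"
    and "principle_dilation scaleA scaleV scale2 \<phi> \<pi>2 S2 T2 W2"
  shows "equivalent_dil scale1 scale2 \<pi>1 S1 T1 W1 \<pi>2 S2 T2 W2 \<and>
         equivalent_dil scale1 (canon_scale scaleV) \<pi>1 S1 T1 W1
           canon_pi canon_S (canon_T \<phi>) (canon_W scaleV \<phi>)"
proof -
  define R1 where "R1 = (\<lambda>w b. S1 (\<pi>1 b w))"
  define R2 where "R2 = (\<lambda>w b. S2 (\<pi>2 b w))"
  have C1: "lin_on scale1 (canon_scale scaleV) W1 R1 \<and> inj_on R1 W1 \<and> R1 ` W1 = canon_W scaleV \<phi> \<and>
    (\<forall>x. R1 (T1 x) = canon_T \<phi> x) \<and> (\<forall>w\<in>W1. canon_S (R1 w) = S1 w) \<and>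
    (\<forall>a. \<forall>w\<in>W1. R1 (\<pi>1 a w) = canon_pi a (R1 w))"
    unfolding R1_def by (rule canon[OF assms(1,2)])
  have C2: "lin_on scale2 (canon_scale scaleV) W2 R2 \<and> inj_on R2 W2 \<and> R2 ` W2 = canon_W scaleV \<phi> \<and>
    (\<forall>x. R2 (T2 x) = canon_T \<phi> x) \<and> (\<forall>w\<in>W2. canon_S (R2 w) = S2 w) \<and>
    (\<forall>a. \<forall>w\<in>W2. R2 (\<pi>2 a w) = canon_pi a (R2 w))"
    unfolding R2_def by (rule canon[OF assms(1,3)])
  have D1: "(\<forall>a. \<forall>w\<in>W1. \<pi>1 a w \<in> W1) \<and> (\<forall>x\<in>W1. \<forall>y\<in>W1. x + y \<in> W1) \<and>
         (\<forall>c. \<forall>x\<in>W1. scale1 c x \<in> W1) \<and> (\<forall>x. T1 x \<in> W1)"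
    by (rule dil_facts[OF assms(2)])
  have D2: "(\<forall>a. \<forall>w\<in>W2. \<pi>2 a w \<in> W2) \<and> (\<forall>x\<in>W2. \<forall>y\<in>W2. x + y \<in> W2) \<and>
         (\<forall>c. \<forall>x\<in>W2. scale2 c x \<in> W2) \<and> (\<forall>x. T2 x \<in> W2)"
    by (rule dil_facts[OF assms(3)])
  show ?thesis
  proof
    show "equivalent_dil scale1 scale2 \<pi>1 S1 T1 W1 \<pi>2 S2 T2 W2"
      using C1 C2 D1 D2 by (elim conjE) (rule compose; assumption)
    show "equivalent_dil scale1 (canon_scale scaleV) \<pi>1 S1 T1 W1
           canon_pi canon_S (canon_T \<phi>) (canon_W scaleV \<phi>)"
      using C1 D1 by (elim conjE) (rule equiv_from; assumption)
  qed
qed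

end
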